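(* There exists $n_0$ such that the following holds for all $n\ge n_0$. Let $T\in\mathbb{C}^{n\times n\times n\times n}$ with $\|T\|_F=1$, and let $M=n^2\max_{i,j,k,l}|T_{ijkl}|$. Let $\mathrm{OPT}_T=\max_{\vec x,\vec y,\vec u,\vec v\in\mathbb{C}^n\setminus\{0\}}\frac{|\langle T,\vec x\otimes\vec y\otimes\vec u\otimes\vec v\rangle|}{\|\vec x\|_2\|\vec y\|_2\|\vec u\|_2\|\vec v\|_2}$, let $|\psi_T\rangle=\sum_{i,j,k,l\in[n]}T_{ijkl}|e_i\rangle\otimes|e_j\rangle\otimes|e_k\rangle\otimes|e_l\rangle$ (a $4n$-qubit state), and let $\mathrm{OPT}_{\psi}=\max|\langle\sigma|\psi_T\rangle|$ over all $4n$-qubit pure product states $|\sigma\rangle=|\sigma_1\rangle\otimes\cdots\otimes|\sigma_{4n}\rangle$. Then \[ e^{-2}\mathrm{OPT}_T-\frac{10M}{n^{0.2}}\le\mathrm{OPT}_{\psi}\le e^{-2}\mathrm{OPT}_T+\frac{10}{n^{0.1}}+\frac{10M}{n^{0.2}}. \]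
   Context: $|e_i\rangle$ is the $n$-qubit computational basis state with $|1\rangle$ on qubit $i$ and $|0\rangle$ elsewhere. $\langle T,X\rangle=\sum_{ijkl}T_{ijkl}X_{ijkl}$, and $\|T\|_F$ is the Frobenius norm. *)

theory Defs
  imports "HOL-Analysis.Analysis"
begin

text \<open>Tensors T in C^(n x n x n x n) are functions nat => nat => nat => nat => complex,
  only entries with indices < n being relevant (indices 0..n-1 stand for [n]).
  Vectors in C^n are functions nat => complex, coordinates < n relevant.\<close>

definition frob :: "nat \<Rightarrow> (nat \<Rightarrow> nat \<Rightarrow> nat \<Rightarrow> nat \<Rightarrow> complex) \<Rightarrow> real" where
  "frob n T = sqrt (\<Sum>i<n. \<Sum>j<n. \<Sum>k<n. \<Sum>l<n. (cmod (T i j k l))\<^sup>2)"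

definition max_entry :: "nat \<Rightarrow> (nat \<Rightarrow> nat \<Rightarrow> nat \<Rightarrow> nat \<Rightarrow> complex) \<Rightarrow> real" where
  "max_entry n T = Max {cmod (T i j k l) | i j k l. i < n \<and> j < n \<and> k < n \<and> l < n}"

definition vnorm :: "nat \<Rightarrow> (nat \<Rightarrow> complex) \<Rightarrow> real" where
  "vnorm n x = sqrt (\<Sum>i<n. (cmod (x i))\<^sup>2)"

definition nonzero_vec :: "nat \<Rightarrow> (nat \<Rightarrow> complex) \<Rightarrow> bool" where
  "nonzero_vec n x \<longleftrightarrow> (\<exists>i<n. x i \<noteq> 0)"

definition tpair :: "nat \<Rightarrow> (nat \<Rightarrow> nat \<Rightarrow> nat \<Rightarrow> nat \<Rightarrow> complex) \<Rightarrow>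
    (nat \<Rightarrow> complex) \<Rightarrow> (nat \<Rightarrow> complex) \<Rightarrow> (nat \<Rightarrow> complex) \<Rightarrow> (nat \<Rightarrow> complex) \<Rightarrow> complex" where
  "tpair n T x y u v = (\<Sum>i<n. \<Sum>j<n. \<Sum>k<n. \<Sum>l<n. T i j k l * x i * y j * u k * v l)"

definition OPT_T :: "nat \<Rightarrow> (nat \<Rightarrow> nat \<Rightarrow> nat \<Rightarrow> nat \<Rightarrow> complex) \<Rightarrow> real" where
  "OPT_T n T = Sup {cmod (tpair n T x y u v) / (vnorm n x * vnorm n y * vnorm n u * vnorm n v) | x y u v.
      nonzero_vec n x \<and> nonzero_vec n y \<and> nonzero_vec n u \<and> nonzero_vec n v}"

text \<open>Computational basis states of m qubits are bit lists of length m (qubit q is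
  entry q; True = |1>). |e_i> on n qubits is the list with True exactly at position i.\<close>
definition basis_e :: "nat \<Rightarrow> nat \<Rightarrow> bool list" where
  "basis_e n i = map (\<lambda>q. q = i) [0..<n]"

definition psi :: "nat \<Rightarrow> (nat \<Rightarrow> nat \<Rightarrow> nat \<Rightarrow> nat \<Rightarrow> complex) \<Rightarrow> bool list \<Rightarrow> complex" where
  "psi n T bs = (\<Sum>i<n. \<Sum>j<n. \<Sum>k<n. \<Sum>l<n.
      if bs = basis_e n i @ basis_e n j @ basis_e n k @ basis_e n l then T i j k l else 0)"

text \<open>A product state |sigma_0> (x) ... (x) |sigma_(m-1)>; sigma q b is the amplitude
  of qubit q on |b>.  Its amplitude on a basis state bs is the product.\<close>
definition prod_amp :: "(nat \<Rightarrow> bool \<Rightarrow> complex) \<Rightarrow> bool list \<Rightarrow> complex" where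
  "prod_amp \<sigma> bs = (\<Prod>q<length bs. \<sigma> q (bs ! q))"

definition pure_product_state :: "nat \<Rightarrow> (nat \<Rightarrow> bool \<Rightarrow> complex) \<Rightarrow> bool" where
  "pure_product_state m \<sigma> \<longleftrightarrow> (\<forall>q<m. (cmod (\<sigma> q False))\<^sup>2 + (cmod (\<sigma> q True))\<^sup>2 = 1)"

definition braket :: "nat \<Rightarrow> (bool list \<Rightarrow> complex) \<Rightarrow> (bool list \<Rightarrow> complex) \<Rightarrow> complex" where
  "braket m s phi = (\<Sum>bs\<in>{bs. length bs = m}. cnj (s bs) * phi bs)"

definition OPT_psi :: "nat \<Rightarrow> (nat \<Rightarrow> nat \<Rightarrow> nat \<Rightarrow> nat \<Rightarrow> complex) \<Rightarrow> real" where
  "OPT_psi n T = Sup {cmod (braket (4*n) (prod_amp \<sigma>) (psi n T)) | \<sigma>. pure_product_state (4*n) \<sigma>}"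

end

theory Submission
  imports Defs
begin


lemma cs_cmod:
  assumes "finite A"
  shows "cmod (\<Sum>a\<in>A. f a * g a) \<le> sqrt (\<Sum>a\<in>A. (cmod (f a))\<^sup>2) * sqrt (\<Sum>a\<in>A. (cmod (g a))\<^sup>2)"
proof -
  have "cmod (\<Sum>a\<in>A. f a * g a) \<le> (\<Sum>a\<in>A. cmod (f a) * cmod (g a))"
    by (rule order_trans[OF norm_sum]) (simp add: norm_mult)
  also have "\<dots> \<le> sqrt (\<Sum>a\<in>A. (cmod (f a))\<^sup>2) * sqrt (\<Sum>a\<in>A. (cmod (g a))\<^sup>2)"
  proof -
    have "(\<Sum>a\<in>A. cmod (f a) * cmod (g a))\<^sup>2 \<le> (\<Sum>a\<in>A. (cmod (f a))\<^sup>2) * (\<Sum>a\<in>A. (cmod (g a))\<^sup>2)"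
      by (rule Cauchy_Schwarz_ineq_sum)
    then show ?thesis
      using real_le_rsqrt real_sqrt_mult by metis
  qed
  finally show ?thesis .
qed

lemma sum4_prod:
  fixes a b c d :: "nat \<Rightarrow> real"
  shows "(\<Sum>i\<in>A. \<Sum>j\<in>B. \<Sum>k\<in>C. \<Sum>l\<in>D. a i * b j * c k * d l) = sum a A * sum b B * sum c C * sum d D"
proof -
  have "(\<Sum>i\<in>A. \<Sum>j\<in>B. \<Sum>k\<in>C. \<Sum>l\<in>D. a i * b j * c k * d l)
      = (\<Sum>i\<in>A. a i * (\<Sum>j\<in>B. b j * (\<Sum>k\<in>C. c k * (\<Sum>l\<in>D. d l))))"
    by (simp add: sum_distrib_left mult.assoc)
  also have "\<dots> = sum a A * (sum b B * (sum c C * sum d D))"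
    by (simp add: sum_distrib_right)
  finally show ?thesis by (simp add: mult.assoc)
qed

lemma tpair_flat:
  "tpair n T x y u v = (\<Sum>(i,j,k,l)\<in>{..<n}\<times>{..<n}\<times>{..<n}\<times>{..<n}. T i j k l * (x i * y j * u k * v l))"
  unfolding tpair_def by (simp add: sum.cartesian_product mult.assoc)

lemma frob_flat:
  "(\<Sum>i<n. \<Sum>j<n. \<Sum>k<n. \<Sum>l<n. (cmod (T i j k l))\<^sup>2) = (\<Sum>(i,j,k,l)\<in>{..<n}\<times>{..<n}\<times>{..<n}\<times>{..<n}. (cmod (T i j k l))\<^sup>2)"
  by (simp add: sum.cartesian_product)

lemma vprod_flat:
  fixes n :: nat
  shows "(\<Sum>(i,j,k,l)\<in>{..<n}\<times>{..<n}\<times>{..<n}\<times>{..<n}. (cmod (x i * y j * u k * v l))\<^sup>2)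
   = (\<Sum>i<n. (cmod (x i))\<^sup>2) * (\<Sum>i<n. (cmod (y i))\<^sup>2) * (\<Sum>i<n. (cmod (u i))\<^sup>2) * (\<Sum>i<n. (cmod (v i))\<^sup>2)"
proof -
  have "(\<Sum>(i,j,k,l)\<in>{..<n}\<times>{..<n}\<times>{..<n}\<times>{..<n}. (cmod (x i * y j * u k * v l))\<^sup>2)
     = (\<Sum>i<n. \<Sum>j<n. \<Sum>k<n. \<Sum>l<n. (cmod (x i * y j * u k * v l))\<^sup>2)"
    by (simp only: sum.cartesian_product)
  also have "\<dots> = (\<Sum>i<n. \<Sum>j<n. \<Sum>k<n. \<Sum>l<n. (cmod (x i))\<^sup>2 * (cmod (y j))\<^sup>2 * (cmod (u k))\<^sup>2 * (cmod (v l))\<^sup>2)"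
    by (simp only: norm_mult power_mult_distrib)
  also have "\<dots> = (\<Sum>i<n. (cmod (x i))\<^sup>2) * (\<Sum>i<n. (cmod (y i))\<^sup>2) * (\<Sum>i<n. (cmod (u i))\<^sup>2) * (\<Sum>i<n. (cmod (v i))\<^sup>2)"
    by (rule sum4_prod)
  finally show ?thesis .
qed

lemma vnorm_nonneg: "0 \<le> vnorm n x"
  by (simp add: vnorm_def sum_nonneg)

lemma vnorm_sq: "(vnorm n x)\<^sup>2 = (\<Sum>i<n. (cmod (x i))\<^sup>2)"
  by (simp add: vnorm_def sum_nonneg)

lemma frob_nonneg: "0 \<le> frob n T"
  by (simp add: frob_def sum_nonneg)

lemma tpair_cs:
  "cmod (tpair n T x y u v) \<le> frob n T * (vnorm n x * vnorm n y * vnorm n u * vnorm n v)"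
proof -
  let ?P = "{..<n}\<times>{..<n}\<times>{..<n}\<times>{..<n}"
  let ?f = "\<lambda>(i,j,k,l). T i j k l"
  let ?g = "\<lambda>(i,j,k,l). x i * y j * u k * v l"
  have e1: "tpair n T x y u v = (\<Sum>p\<in>?P. ?f p * ?g p)"
    unfolding tpair_flat by (rule sum.cong) auto
  have e2: "(\<Sum>p\<in>?P. (cmod (?f p))\<^sup>2) = (frob n T)\<^sup>2"
    unfolding frob_def frob_flat by (simp add: sum_nonneg case_prod_beta)
  have e3: "(\<Sum>p\<in>?P. (cmod (?g p))\<^sup>2) = (vnorm n x * vnorm n y * vnorm n u * vnorm n v)\<^sup>2"
  proof -
    have "(\<Sum>p\<in>?P. (cmod (?g p))\<^sup>2) = (\<Sum>(i,j,k,l)\<in>?P. (cmod (x i * y j * u k * v l))\<^sup>2)"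
      by (rule sum.cong) auto
    also have "\<dots> = (\<Sum>i<n. (cmod (x i))\<^sup>2) * (\<Sum>i<n. (cmod (y i))\<^sup>2) * (\<Sum>i<n. (cmod (u i))\<^sup>2) * (\<Sum>i<n. (cmod (v i))\<^sup>2)"
      by (rule vprod_flat)
    finally show ?thesis by (simp add: vnorm_sq power_mult_distrib)
  qed
  have "cmod (tpair n T x y u v) \<le> sqrt ((frob n T)\<^sup>2) * sqrt ((vnorm n x * vnorm n y * vnorm n u * vnorm n v)\<^sup>2)"
    using cs_cmod[of ?P ?f ?g] e1 e2 e3 by simp
  then show ?thesis by (simp add: frob_nonneg vnorm_nonneg)
qed

lemma tpair_add1: "tpair n T (\<lambda>i. x1 i + x2 i) y u v = tpair n T x1 y u v + tpair n T x2 y u v"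
  by (simp add: tpair_def algebra_simps sum.distrib)
lemma tpair_add2: "tpair n T x (\<lambda>i. x1 i + x2 i) u v = tpair n T x x1 u v + tpair n T x x2 u v"
  by (simp add: tpair_def algebra_simps sum.distrib)
lemma tpair_add3: "tpair n T x y (\<lambda>i. x1 i + x2 i) v = tpair n T x y x1 v + tpair n T x y x2 v"
  by (simp add: tpair_def algebra_simps sum.distrib)
lemma tpair_add4: "tpair n T x y u (\<lambda>i. x1 i + x2 i) = tpair n T x y u x1 + tpair n T x y u x2"
  by (simp add: tpair_def algebra_simps sum.distrib)

lemma tpair_scale:
  "tpair n T (\<lambda>i. x i * a) (\<lambda>i. y i * b) (\<lambda>i. u i * c) (\<lambda>i. v i * d) = (a * b * c * d) * tpair n T x y u v"
  by (simp add: tpair_def sum_distrib_left mult_ac)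

definition l1 :: "nat \<Rightarrow> (nat \<Rightarrow> complex) \<Rightarrow> real" where
  "l1 n x = (\<Sum>i<n. cmod (x i))"

lemma l1_nonneg: "0 \<le> l1 n x" by (simp add: l1_def sum_nonneg)

lemma tpair_l1:
  assumes "\<And>i j k l. i < n \<Longrightarrow> j < n \<Longrightarrow> k < n \<Longrightarrow> l < n \<Longrightarrow> cmod (T i j k l) \<le> m"
  shows "cmod (tpair n T x y u v) \<le> m * (l1 n x * l1 n y * l1 n u * l1 n v)"
proof -
  let ?P = "{..<n}\<times>{..<n}\<times>{..<n}\<times>{..<n}"
  have "cmod (tpair n T x y u v) \<le> (\<Sum>(i,j,k,l)\<in>?P. cmod (T i j k l * (x i * y j * u k * v l)))"
    unfolding tpair_flat by (rule order_trans[OF norm_sum]) (simp add: case_prod_beta)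
  also have "\<dots> \<le> (\<Sum>(i,j,k,l)\<in>?P. m * (cmod (x i) * cmod (y j) * cmod (u k) * cmod (v l)))"
    by (rule sum_mono) (auto simp: norm_mult intro!: mult_right_mono assms)
  also have "\<dots> = m * (\<Sum>(i,j,k,l)\<in>?P. cmod (x i) * cmod (y j) * cmod (u k) * cmod (v l))"
    unfolding sum_distrib_left by (rule sum.cong) auto
  also have "m * (\<Sum>(i,j,k,l)\<in>?P. cmod (x i) * cmod (y j) * cmod (u k) * cmod (v l))
     = m * (\<Sum>i<n. \<Sum>j<n. \<Sum>k<n. \<Sum>l<n. cmod (x i) * cmod (y j) * cmod (u k) * cmod (v l))"
    by (simp only: sum.cartesian_product)
  also have "\<dots> = m * (l1 n x * l1 n y * l1 n u * l1 n v)"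
    unfolding l1_def using sum4_prod[where a="\<lambda>i. cmod (x i)" and b="\<lambda>i. cmod (y i)" and c="\<lambda>i. cmod (u i)"
      and d="\<lambda>i. cmod (v i)" and A="{..<n}" and B="{..<n}" and C="{..<n}" and D="{..<n}"] by (simp only:)
  finally show ?thesis .
qed

lemma l1_le_vnorm: "l1 n x \<le> sqrt (real n) * vnorm n x"
proof -
  have "(\<Sum>i<n. cmod (x i) * 1)\<^sup>2 \<le> (\<Sum>i<n. (cmod (x i))\<^sup>2) * (\<Sum>i<n. 1\<^sup>2)"
    by (rule Cauchy_Schwarz_ineq_sum)
  then have "(l1 n x)\<^sup>2 \<le> (vnorm n x)\<^sup>2 * real n" by (simp add: l1_def vnorm_sq)
  then have "l1 n x \<le> sqrt ((vnorm n x)\<^sup>2 * real n)" by (rule real_le_rsqrt)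
  then show ?thesis by (simp add: real_sqrt_mult vnorm_nonneg mult.commute)
qed

lemma max_entry_ge:
  assumes "i < n" "j < n" "k < n" "l < n"
  shows "cmod (T i j k l) \<le> max_entry n T"
proof -
  have "{cmod (T i j k l) | i j k l. i < n \<and> j < n \<and> k < n \<and> l < n}
     \<subseteq> (\<lambda>(i,j,k,l). cmod (T i j k l)) ` ({..<n}\<times>{..<n}\<times>{..<n}\<times>{..<n})"
    by force
  then have fin: "finite {cmod (T i j k l) | i j k l. i < n \<and> j < n \<and> k < n \<and> l < n}"
    by (rule finite_subset) auto
  show ?thesis unfolding max_entry_def
    by (rule Max_ge[OF fin]) (use assms in blast)
qed

lemma max_entry_nonneg: "0 < n \<Longrightarrow> 0 \<le> max_entry n T"
  using max_entry_ge[of 0 n 0 0 0 T] by (meson norm_ge_zero order_trans)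

lemma vnorm_pos: "nonzero_vec n x \<Longrightarrow> 0 < vnorm n x"
proof -
  assume "nonzero_vec n x"
  then obtain i where "i < n" "x i \<noteq> 0" by (auto simp: nonzero_vec_def)
  then have "0 < (\<Sum>i<n. (cmod (x i))\<^sup>2)"
    by (intro sum_pos2[of _ i]) auto
  then show ?thesis by (simp add: vnorm_def)
qed

lemma tpair_zero1: "\<not> nonzero_vec n x \<Longrightarrow> tpair n T x y u v = 0"
  by (simp add: nonzero_vec_def tpair_def)
lemma tpair_zero2: "\<not> nonzero_vec n x \<Longrightarrow> tpair n T w x u v = 0"
  by (simp add: nonzero_vec_def tpair_def)
lemma tpair_zero3: "\<not> nonzero_vec n x \<Longrightarrow> tpair n T w y x v = 0"
  by (simp add: nonzero_vec_def tpair_def)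
lemma tpair_zero4: "\<not> nonzero_vec n x \<Longrightarrow> tpair n T w y u x = 0"
  by (simp add: nonzero_vec_def tpair_def)

definition OPTset where
  "OPTset n T = {cmod (tpair n T x y u v) / (vnorm n x * vnorm n y * vnorm n u * vnorm n v) | x y u v.
      nonzero_vec n x \<and> nonzero_vec n y \<and> nonzero_vec n u \<and> nonzero_vec n v}"

lemma OPT_T_eq: "OPT_T n T = Sup (OPTset n T)"
  by (simp add: OPT_T_def OPTset_def)

lemma OPTset_ne: "0 < n \<Longrightarrow> OPTset n T \<noteq> {}"
proof -
  assume n: "0 < n"
  let ?e = "(\<lambda>_::nat. 1::complex)"
  have nz: "nonzero_vec n ?e" using n unfolding nonzero_vec_def by auto
  have "cmod (tpair n T ?e ?e ?e ?e) / (vnorm n ?e * vnorm n ?e * vnorm n ?e * vnorm n ?e) \<in> OPTset n T"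
    unfolding OPTset_def using nz by blast
  then show ?thesis by blast
qed

lemma OPTset_le:
  assumes "frob n T = 1" "r \<in> OPTset n T" shows "r \<le> 1"
proof -
  from assms(2) obtain x y u v where r: "r = cmod (tpair n T x y u v) / (vnorm n x * vnorm n y * vnorm n u * vnorm n v)"
    and nz: "nonzero_vec n x" "nonzero_vec n y" "nonzero_vec n u" "nonzero_vec n v"
    unfolding OPTset_def by blast
  have pos: "0 < vnorm n x * vnorm n y * vnorm n u * vnorm n v"
    using nz by (simp add: vnorm_pos)
  show ?thesis unfolding r using tpair_cs[of n T x y u v] assms(1) pos
    by (simp add: divide_le_eq)
qed

lemma OPTset_nonneg: "r \<in> OPTset n T \<Longrightarrow> 0 \<le> r"
  unfolding OPTset_def by (auto intro!: divide_nonneg_nonneg mult_nonneg_nonneg vnorm_nonneg)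

lemma OPTset_bdd: "frob n T = 1 \<Longrightarrow> bdd_above (OPTset n T)"
  using OPTset_le by (meson bdd_above.I)

lemma OPT_T_le1: "0 < n \<Longrightarrow> frob n T = 1 \<Longrightarrow> OPT_T n T \<le> 1"
  unfolding OPT_T_eq by (rule cSup_least) (auto simp: OPTset_ne OPTset_le)

lemma OPT_T_nonneg: "0 < n \<Longrightarrow> frob n T = 1 \<Longrightarrow> 0 \<le> OPT_T n T"
proof -
  assume a: "0 < n" "frob n T = 1"
  obtain r where r: "r \<in> OPTset n T" using OPTset_ne[OF a(1)] by blast
  show ?thesis unfolding OPT_T_eq
    by (rule cSup_upper2[OF r OPTset_nonneg[OF r] OPTset_bdd[OF a(2)]])
qed

lemma tpair_opt:
  assumes "0 < n" "frob n T = 1"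
  shows "cmod (tpair n T x y u v) \<le> OPT_T n T * (vnorm n x * vnorm n y * vnorm n u * vnorm n v)"
proof (cases "nonzero_vec n x \<and> nonzero_vec n y \<and> nonzero_vec n u \<and> nonzero_vec n v")
  case True
  have pos: "0 < vnorm n x * vnorm n y * vnorm n u * vnorm n v"
    using True by (simp add: vnorm_pos)
  have "cmod (tpair n T x y u v) / (vnorm n x * vnorm n y * vnorm n u * vnorm n v) \<in> OPTset n T"
    unfolding OPTset_def using True by blast
  then have "cmod (tpair n T x y u v) / (vnorm n x * vnorm n y * vnorm n u * vnorm n v) \<le> OPT_T n T"
    unfolding OPT_T_eq by (rule cSup_upper[OF _ OPTset_bdd[OF assms(2)]])
  then show ?thesis using pos by (simp add: divide_le_eq)
next
  case False
  then have "tpair n T x y u v = 0"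
    using tpair_zero1[of n x T y u v] tpair_zero2[of n y T x u v] tpair_zero3[of n u T x y v]
      tpair_zero4[of n v T x y u] by blast
  then show ?thesis
    using OPT_T_nonneg[OF assms] by (simp add: vnorm_nonneg)
qed



lemma len_basis[simp]: "length (basis_e n i) = n" by (simp add: basis_e_def)
lemma basis_nth: "q < n \<Longrightarrow> basis_e n i ! q = (q = i)" by (simp add: basis_e_def)

lemma prod_lessThan_add: "(\<Prod>q<m+(k::nat). g q) = (\<Prod>q<m. g q) * (\<Prod>q<k. g (m+q))"
  by (induction k) (simp_all add: mult.assoc)

lemma prod_amp_append: "prod_amp \<sigma> (a @ b) = prod_amp \<sigma> a * prod_amp (\<lambda>q. \<sigma> (length a + q)) b"
proof -
  have "prod_amp \<sigma> (a @ b) = (\<Prod>q<length a. \<sigma> q ((a@b) ! q)) * (\<Prod>q<length b. \<sigma> (length a + q) ((a@b) ! (length a + q)))"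
    unfolding prod_amp_def by (simp add: prod_lessThan_add)
  also have "(\<Prod>q<length a. \<sigma> q ((a@b) ! q)) = (\<Prod>q<length a. \<sigma> q (a ! q))"
    by (rule prod.cong) (auto simp: nth_append)
  also have "(\<Prod>q<length b. \<sigma> (length a + q) ((a@b) ! (length a + q))) = (\<Prod>q<length b. \<sigma> (length a + q) (b ! q))"
    by (simp add: nth_append)
  finally show ?thesis unfolding prod_amp_def .
qed

definition amp :: "nat \<Rightarrow> (nat \<Rightarrow> bool \<Rightarrow> complex) \<Rightarrow> nat \<Rightarrow> complex" where
  "amp n \<rho> i = (\<Prod>q<n. \<rho> q (q = i))"

lemma prod_amp_basis: "prod_amp \<rho> (basis_e n i) = amp n \<rho> i"
  unfolding prod_amp_def amp_def by (rule prod.cong) (auto simp: basis_nth)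

lemma prod_amp_E: "prod_amp \<sigma> (basis_e n i @ basis_e n j @ basis_e n k @ basis_e n l)
   = amp n \<sigma> i * amp n (\<lambda>q. \<sigma> (n+q)) j * amp n (\<lambda>q. \<sigma> (n+(n+q))) k * amp n (\<lambda>q. \<sigma> (n+(n+(n+q)))) l"
  by (simp add: prod_amp_append prod_amp_basis mult.assoc)

lemma fin_lists: "finite {bs::bool list. length bs = m}"
  using finite_lists_length_eq[of "UNIV::bool set" m] by simp

lemma mult_if0: "(a::complex) * (if P then b else 0) = (if P then a * b else 0)" by simp

lemma four_n: "n + (n + (n + n)) = 4 * (n::nat)" by simp

lemma lenE: "length (basis_e n i @ basis_e n j @ basis_e n k @ basis_e n l) = 4 * n" by simp

lemma braket_psi:
  "braket (4*n) s (psi n T) = (\<Sum>i<n. \<Sum>j<n. \<Sum>k<n. \<Sum>l<n.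
      cnj (s (basis_e n i @ basis_e n j @ basis_e n k @ basis_e n l)) * T i j k l)"
proof -
  have "braket (4*n) s (psi n T) = (\<Sum>bs\<in>{bs::bool list. length bs = 4*n}. \<Sum>i<n. \<Sum>j<n. \<Sum>k<n. \<Sum>l<n.
     if bs = basis_e n i @ basis_e n j @ basis_e n k @ basis_e n l then cnj (s bs) * T i j k l else 0)"
    unfolding braket_def psi_def by (simp add: sum_distrib_left mult_if0)
  also have "\<dots> = (\<Sum>i<n. \<Sum>j<n. \<Sum>k<n. \<Sum>l<n. \<Sum>bs\<in>{bs::bool list. length bs = 4*n}.
     if bs = basis_e n i @ basis_e n j @ basis_e n k @ basis_e n l then cnj (s bs) * T i j k l else 0)"
    by (simp only: sum.swap[where A = "{bs::bool list. length bs = 4*n}"])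
  also have "\<dots> = (\<Sum>i<n. \<Sum>j<n. \<Sum>k<n. \<Sum>l<n.
      cnj (s (basis_e n i @ basis_e n j @ basis_e n k @ basis_e n l)) * T i j k l)"
    by (simp add: fin_lists four_n)
  finally show ?thesis .
qed

lemma braket_tpair:
  "braket (4*n) (prod_amp \<sigma>) (psi n T) = tpair n T (\<lambda>i. cnj (amp n \<sigma> i)) (\<lambda>i. cnj (amp n (\<lambda>q. \<sigma> (n+q)) i))
     (\<lambda>i. cnj (amp n (\<lambda>q. \<sigma> (n+(n+q))) i)) (\<lambda>i. cnj (amp n (\<lambda>q. \<sigma> (n+(n+(n+q)))) i))"
  unfolding braket_psi prod_amp_E tpair_def by (simp add: mult_ac)

lemma amp_split: "i < n \<Longrightarrow> amp n \<rho> i = \<rho> i True * (\<Prod>q\<in>{..<n}-{i}. \<rho> q False)"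
proof -
  assume i: "i < n"
  have "amp n \<rho> i = \<rho> i (i = i) * (\<Prod>q\<in>{..<n}-{i}. \<rho> q (q = i))"
    unfolding amp_def using i by (subst prod.remove[of _ i]) auto
  also have "(\<Prod>q\<in>{..<n}-{i}. \<rho> q (q = i)) = (\<Prod>q\<in>{..<n}-{i}. \<rho> q False)"
    by (rule prod.cong) auto
  finally show ?thesis by simp
qed

lemma amp_cong: "(\<And>q. q < n \<Longrightarrow> \<rho> q = \<rho>' q) \<Longrightarrow> amp n \<rho> i = amp n \<rho>' i"
  unfolding amp_def by (rule prod.cong) auto

definition pp where "pp \<rho> q = (cmod (\<rho> q True))\<^sup>2"
definition pure where "pure n \<rho> \<longleftrightarrow> (\<forall>q<n. (cmod (\<rho> q False))\<^sup>2 + (cmod (\<rho> q True))\<^sup>2 = 1)"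

lemma pp_bounds: "pure n \<rho> \<Longrightarrow> q < n \<Longrightarrow> 0 \<le> pp \<rho> q \<and> pp \<rho> q \<le> 1"
  unfolding pure_def pp_def by (metis le_add_same_cancel2 zero_le_power2)

lemma pp_false: "pure n \<rho> \<Longrightarrow> q < n \<Longrightarrow> (cmod (\<rho> q False))\<^sup>2 = 1 - pp \<rho> q"
  unfolding pure_def pp_def by (simp add: algebra_simps)

lemma amp_sq: "pure n \<rho> \<Longrightarrow> i < n \<Longrightarrow> (cmod (amp n \<rho> i))\<^sup>2 = pp \<rho> i * (\<Prod>q\<in>{..<n}-{i}. 1 - pp \<rho> q)"
proof -
  assume a: "pure n \<rho>" "i < n"
  have "(cmod (amp n \<rho> i))\<^sup>2 = (cmod (\<rho> i True))\<^sup>2 * (\<Prod>q\<in>{..<n}-{i}. (cmod (\<rho> q False))\<^sup>2)"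
    using a(2) by (simp add: amp_split norm_mult power_mult_distrib prod_norm[symmetric] prod_power_distrib)
  moreover have "(cmod (\<rho> i True))\<^sup>2 = pp \<rho> i" by (simp add: pp_def)
  moreover have "(\<Prod>q\<in>{..<n}-{i}. (cmod (\<rho> q False))\<^sup>2) = (\<Prod>q\<in>{..<n}-{i}. 1 - pp \<rho> q)"
    using a by (intro prod.cong) (auto simp: pp_false)
  ultimately show ?thesis by simp
qed

lemma prod_subset_le:
  fixes f :: "nat \<Rightarrow> real"
  assumes "finite A" "B \<subseteq> A" "\<And>q. q \<in> A \<Longrightarrow> 0 \<le> f q \<and> f q \<le> 1"
  shows "prod f A \<le> prod f B"
proof -
  have "prod f A = prod f (A - B) * prod f B" using assms by (simp add: prod.subset_diff)
  also have "\<dots> \<le> 1 * prod f B"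
    by (rule mult_right_mono) (use assms in \<open>auto intro!: prod_le_1 prod_nonneg\<close>)
  finally show ?thesis by simp
qed

lemma one_minus_le_exp: "1 - t \<le> exp (- t::real)"
  using exp_ge_add_one_self[of "-t"] by simp

lemma prod_one_minus_le_exp:
  fixes f :: "nat \<Rightarrow> real"
  assumes "finite A" "\<And>q. q \<in> A \<Longrightarrow> 0 \<le> f q \<and> f q \<le> 1"
  shows "(\<Prod>q\<in>A. 1 - f q) \<le> exp (- sum f A)"
proof -
  have "(\<Prod>q\<in>A. 1 - f q) \<le> (\<Prod>q\<in>A. exp (- f q))"
    by (rule prod_mono) (use assms one_minus_le_exp in auto)
  also have "\<dots> = exp (- sum f A)"
    using exp_sum[of A "\<lambda>q. - f q"] assms(1) by (simp add: sum_negf)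
  finally show ?thesis .
qed

lemma block_S:
  assumes pure: "pure n \<rho>" and t: "0 \<le> \<tau>"
  shows "(vnorm n (\<lambda>i. if pp \<rho> i \<le> \<tau> then cnj (amp n \<rho> i) else 0))\<^sup>2 \<le> exp (\<tau> - 1)"
proof -
  define S where "S = {i \<in> {..<n}. pp \<rho> i \<le> \<tau>}"
  define s where "s = sum (pp \<rho>) S"
  have finS: "finite S" and Ssub: "S \<subseteq> {..<n}" by (auto simp: S_def)
  have pb: "\<And>q. q < n \<Longrightarrow> 0 \<le> pp \<rho> q \<and> pp \<rho> q \<le> 1" using pp_bounds[OF pure] by blast
  have "(vnorm n (\<lambda>i. if pp \<rho> i \<le> \<tau> then cnj (amp n \<rho> i) else 0))\<^sup>2 = (\<Sum>i\<in>S. (cmod (amp n \<rho> i))\<^sup>2)"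
    unfolding vnorm_sq S_def by (subst sum.inter_filter) (auto intro!: sum.cong)
  also have "\<dots> \<le> (\<Sum>i\<in>S. pp \<rho> i * exp (\<tau> - s))"
  proof (rule sum_mono)
    fix i assume iS: "i \<in> S"
    then have i: "i < n" "pp \<rho> i \<le> \<tau>" by (auto simp: S_def)
    have "(cmod (amp n \<rho> i))\<^sup>2 = pp \<rho> i * (\<Prod>q\<in>{..<n}-{i}. 1 - pp \<rho> q)" by (rule amp_sq[OF pure i(1)])
    also have "\<dots> \<le> pp \<rho> i * (\<Prod>q\<in>S-{i}. 1 - pp \<rho> q)"
      by (rule mult_left_mono[OF prod_subset_le]) (use Ssub pb i in auto)
    also have "\<dots> \<le> pp \<rho> i * exp (- sum (pp \<rho>) (S-{i}))"
      by (rule mult_left_mono[OF prod_one_minus_le_exp]) (use Ssub finS pb i in auto)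
    also have "sum (pp \<rho>) (S-{i}) = s - pp \<rho> i" using iS finS by (simp add: s_def sum_diff1)
    also have "pp \<rho> i * exp (- (s - pp \<rho> i)) \<le> pp \<rho> i * exp (\<tau> - s)"
      by (rule mult_left_mono) (use i pb in auto)
    finally show "(cmod (amp n \<rho> i))\<^sup>2 \<le> pp \<rho> i * exp (\<tau> - s)" .
  qed
  also have "(\<Sum>i\<in>S. pp \<rho> i * exp (\<tau> - s)) = s * exp (\<tau> - s)"
    by (simp add: s_def sum_distrib_right)
  also have "\<dots> = exp \<tau> * (s * exp (-s))"
    by (simp add: exp_diff exp_minus field_simps)
  also have "\<dots> \<le> exp \<tau> * exp (-1)"
  proof -
    have "s \<le> exp (s - 1)" using exp_ge_add_one_self[of "s - 1"] by simp
    then have "s * exp (-s) \<le> exp (s - 1) * exp (-s)" by (rule mult_right_mono) simp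
    also have "\<dots> = exp (-1)" by (simp add: exp_add[symmetric])
    finally show ?thesis by simp
  qed
  also have "\<dots> = exp (\<tau> - 1)" by (simp add: exp_add[symmetric])
  finally show ?thesis .
qed



lemma block_B:
  assumes pure: "pure n \<rho>" and t: "0 < \<tau>" "\<tau> \<le> 2"
  shows "l1 n (\<lambda>i. if pp \<rho> i \<le> \<tau> then 0 else cnj (amp n \<rho> i)) \<le> 2 / \<tau>"
proof -
  define B where "B = {i \<in> {..<n}. \<not> pp \<rho> i \<le> \<tau>}"
  define m where "m = card B"
  have finB: "finite B" and Bsub: "B \<subseteq> {..<n}" by (auto simp: B_def)
  have pb: "\<And>q. q < n \<Longrightarrow> 0 \<le> pp \<rho> q \<and> pp \<rho> q \<le> 1" using pp_bounds[OF pure] by blast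
  have l1eq: "l1 n (\<lambda>i. if pp \<rho> i \<le> \<tau> then 0 else cnj (amp n \<rho> i)) = (\<Sum>i\<in>B. cmod (amp n \<rho> i))"
    unfolding l1_def B_def by (subst sum.inter_filter) (auto intro!: sum.cong)
  show ?thesis
  proof (cases "m = 0")
    case True
    then have "B = {}" using finB by (simp add: m_def)
    then show ?thesis using l1eq t by simp
  next
    case False
    then have m1: "1 \<le> m" by simp
    define y where "y = \<tau> * (real m - 1) / 2"
    define c where "c = 1 / (1 + y)"
    have y0: "0 \<le> y" using m1 t by (simp add: y_def)
    have bnd: "cmod (amp n \<rho> i) \<le> c" if iB: "i \<in> B" for i
    proof -
      have i: "i < n" "\<tau> < pp \<rho> i" using iB by (auto simp: B_def)
      have "(cmod (amp n \<rho> i))\<^sup>2 = pp \<rho> i * (\<Prod>q\<in>{..<n}-{i}. 1 - pp \<rho> q)" by (rule amp_sq[OF pure i(1)])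
      also have "\<dots> \<le> 1 * (\<Prod>q\<in>{..<n}-{i}. 1 - pp \<rho> q)"
        by (rule mult_right_mono) (use pb i in \<open>auto intro!: prod_nonneg\<close>)
      also have "\<dots> \<le> (\<Prod>q\<in>B-{i}. 1 - pp \<rho> q)"
        using prod_subset_le[of "{..<n}-{i}" "B-{i}" "\<lambda>q. 1 - pp \<rho> q"] Bsub pb by auto
      also have "\<dots> \<le> exp (- sum (pp \<rho>) (B-{i}))"
        by (rule prod_one_minus_le_exp) (use Bsub finB pb in auto)
      also have "\<dots> \<le> exp (- (\<tau> * (real m - 1)))"
      proof -
        have "of_nat (card (B-{i})) * \<tau> \<le> sum (pp \<rho>) (B-{i})"
          by (rule sum_bounded_below) (auto simp: B_def)
        moreover have "card (B-{i}) = m - 1" using iB by (simp add: m_def card_Diff_singleton)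
        ultimately have "\<tau> * (real m - 1) \<le> sum (pp \<rho>) (B-{i})" using m1 by (simp add: of_nat_diff mult.commute)
        then show ?thesis by simp
      qed
      also have "\<dots> \<le> c\<^sup>2"
      proof -
        have "1 + y \<le> exp y" by (rule exp_ge_add_one_self)
        then have "(1 + y)\<^sup>2 \<le> (exp y)\<^sup>2" using y0 by (intro power_mono) auto
        also have "(exp y)\<^sup>2 = exp (2 * y)" by (simp add: exp_double)
        also have "2 * y = \<tau> * (real m - 1)" by (simp add: y_def)
        finally have h: "(1 + y)\<^sup>2 \<le> exp (\<tau> * (real m - 1))" .
        have "exp (- (\<tau> * (real m - 1))) = 1 / exp (\<tau> * (real m - 1))" by (simp add: exp_minus inverse_eq_divide)
        also have "\<dots> \<le> 1 / (1 + y)\<^sup>2" using h y0 by (intro divide_left_mono) auto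
        also have "\<dots> = c\<^sup>2" by (simp add: c_def power_divide)
        finally show ?thesis .
      qed
      finally have "(cmod (amp n \<rho> i))\<^sup>2 \<le> c\<^sup>2" .
      moreover have "0 \<le> c" using y0 by (simp add: c_def)
      ultimately show ?thesis by (rule power2_le_imp_le)
    qed
    have "(\<Sum>i\<in>B. cmod (amp n \<rho> i)) \<le> (\<Sum>i\<in>B. c)" by (rule sum_mono) (rule bnd)
    also have "\<dots> = real m * c" by (simp add: m_def)
    also have "\<dots> \<le> 2 / \<tau>"
    proof -
      have pos: "0 < 1 + y" using y0 by simp
      have "2 * (1 + y) = 2 + \<tau> * real m - \<tau>" by (simp add: y_def field_simps)
      then have h2: "real m * \<tau> \<le> 2 * (1 + y)" using t by (simp add: mult.commute)
      have "real m * c = real m / (1 + y)" by (simp add: c_def)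
      also have "\<dots> = (real m * \<tau>) / ((1 + y) * \<tau>)" using t by simp
      also have "\<dots> \<le> (2 * (1 + y)) / ((1 + y) * \<tau>)"
        by (rule divide_right_mono[OF h2]) (use pos t in simp)
      also have "\<dots> = 2 / \<tau>"
      proof -
        have ne: "1 + y \<noteq> 0" using pos by simp
        show ?thesis by (metis ne mult.commute nonzero_mult_divide_mult_cancel_left)
      qed
      finally show ?thesis .
    qed
    finally show ?thesis using l1eq by simp
  qed
qed

definition xs where "xs \<tau> \<rho> n = (\<lambda>i. if pp \<rho> i \<le> \<tau> then cnj (amp n \<rho> i) else 0)"
definition xb where "xb \<tau> \<rho> n = (\<lambda>i. if pp \<rho> i \<le> \<tau> then 0 else cnj (amp n \<rho> i))"
definition xf where "xf \<rho> n = (\<lambda>i. cnj (amp n \<rho> i))"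

lemma xf_split: "xf \<rho> n = (\<lambda>i. xs \<tau> \<rho> n i + xb \<tau> \<rho> n i)"
  by (auto simp: xf_def xs_def xb_def)

lemma block_facts:
  assumes pure: "pure n \<rho>" and t: "0 < \<tau>" "\<tau> \<le> 1" and tn: "2 / \<tau> \<le> sqrt (real n)"
  shows "(vnorm n (xs \<tau> \<rho> n))\<^sup>2 \<le> exp (\<tau> - 1)"
    and "l1 n (xb \<tau> \<rho> n) \<le> 2 / \<tau>"
    and "l1 n (xs \<tau> \<rho> n) \<le> 2 * sqrt (real n)"
    and "l1 n (xf \<rho> n) \<le> 2 * sqrt (real n)"
proof -
  show S: "(vnorm n (xs \<tau> \<rho> n))\<^sup>2 \<le> exp (\<tau> - 1)"
    unfolding xs_def using block_S[OF pure] t by simp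
  show B: "l1 n (xb \<tau> \<rho> n) \<le> 2 / \<tau>"
    unfolding xb_def using block_B[OF pure] t by simp
  have "exp (\<tau> - 1) \<le> 1" using t by simp
  then have sq: "(vnorm n (xs \<tau> \<rho> n))\<^sup>2 \<le> 1" using S by linarith
  then have v1: "vnorm n (xs \<tau> \<rho> n) \<le> 1"
    by (metis one_power2 power2_le_imp_le zero_le_one)
  have LS: "l1 n (xs \<tau> \<rho> n) \<le> sqrt (real n)"
    using l1_le_vnorm[of n "xs \<tau> \<rho> n"] v1 mult_left_mono[OF v1, of "sqrt (real n)"] by simp
  moreover have "0 \<le> sqrt (real n)" by simp
  ultimately show "l1 n (xs \<tau> \<rho> n) \<le> 2 * sqrt (real n)" by linarith
  have "l1 n (xf \<rho> n) = l1 n (xs \<tau> \<rho> n) + l1 n (xb \<tau> \<rho> n)"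
    unfolding l1_def xf_def xs_def xb_def sum.distrib[symmetric] by (rule sum.cong) auto
  then show "l1 n (xf \<rho> n) \<le> 2 * sqrt (real n)" using LS B tn by simp
qed

lemma prod4_mono:
  fixes a b c d A B C D :: real
  assumes "0 \<le> a" "a \<le> A" "0 \<le> b" "b \<le> B" "0 \<le> c" "c \<le> C" "0 \<le> d" "d \<le> D"
  shows "a * b * c * d \<le> A * B * C * D"
proof -
  have A0: "0 \<le> A" "0 \<le> B" "0 \<le> C" using assms by linarith+
  have h1: "a * b \<le> A * B" by (rule mult_mono[OF assms(2) assms(4) A0(1) assms(3)])
  have AB: "0 \<le> A * B" using A0 by simp
  have h2: "a * b * c \<le> A * B * C" by (rule mult_mono[OF h1 assms(6) AB assms(5)])
  have ABC: "0 \<le> A * B * C" using A0 by simp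
  show ?thesis by (rule mult_mono[OF h2 assms(8) ABC assms(7)])
qed

lemma norm5: "cmod (a + b + c + d + e) \<le> cmod a + cmod b + cmod c + cmod d + cmod e"
  using norm_triangle_ineq[of "a+b+c+d" e] norm_triangle_ineq[of "a+b+c" d]
    norm_triangle_ineq[of "a+b" c] norm_triangle_ineq[of a b] by linarith

lemma pure_shift:
  assumes "pure_product_state (4*n) \<sigma>"
  shows "pure n \<sigma>" "pure n (\<lambda>q. \<sigma> (n+q))" "pure n (\<lambda>q. \<sigma> (n+(n+q)))" "pure n (\<lambda>q. \<sigma> (n+(n+(n+q))))"
proof -
  have h: "\<And>q. q < 4*n \<Longrightarrow> (cmod (\<sigma> q False))\<^sup>2 + (cmod (\<sigma> q True))\<^sup>2 = 1"
    using assms by (simp add: pure_product_state_def)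
  show "pure n \<sigma>" unfolding pure_def by (auto intro!: h)
  show "pure n (\<lambda>q. \<sigma> (n+q))" unfolding pure_def by (auto intro!: h)
  show "pure n (\<lambda>q. \<sigma> (n+(n+q)))" unfolding pure_def by (auto intro!: h)
  show "pure n (\<lambda>q. \<sigma> (n+(n+(n+q))))" unfolding pure_def by (auto intro!: h)
qed

lemma upper_sigma:
  assumes n: "0 < n" and fr: "frob n T = 1" and ps: "pure_product_state (4*n) \<sigma>"
    and t: "0 < \<tau>" "\<tau> \<le> 1" and tn: "2 / \<tau> \<le> sqrt (real n)"
  shows "cmod (braket (4*n) (prod_amp \<sigma>) (psi n T))
     \<le> OPT_T n T * exp (2*\<tau> - 2) + 4 * (max_entry n T * ((2/\<tau>) * (2 * sqrt (real n)) * (2 * sqrt (real n)) * (2 * sqrt (real n))))"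
proof -
  define r1 where "r1 = \<sigma>"
  define r2 where "r2 = (\<lambda>q. \<sigma> (n+q))"
  define r3 where "r3 = (\<lambda>q. \<sigma> (n+(n+q)))"
  define r4 where "r4 = (\<lambda>q. \<sigma> (n+(n+(n+q))))"
  have p1: "pure n r1" and p2: "pure n r2" and p3: "pure n r3" and p4: "pure n r4"
    using pure_shift[OF ps] by (simp_all add: r1_def r2_def r3_def r4_def)
  let ?K = "(2/\<tau>) * (2 * sqrt (real n)) * (2 * sqrt (real n)) * (2 * sqrt (real n))"
  let ?m = "max_entry n T"
  have m0: "0 \<le> ?m" using max_entry_nonneg[OF n] .
  have mT: "\<And>i j k l. i < n \<Longrightarrow> j < n \<Longrightarrow> k < n \<Longrightarrow> l < n \<Longrightarrow> cmod (T i j k l) \<le> ?m"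
    by (rule max_entry_ge)
  have sq0: "0 \<le> sqrt (real n)" by simp
  have tau0: "0 \<le> 2 / \<tau>" using t by simp
  note f1 = block_facts[OF p1 t tn] and f2 = block_facts[OF p2 t tn]
   and f3 = block_facts[OF p3 t tn] and f4 = block_facts[OF p4 t tn]
  have br: "braket (4*n) (prod_amp \<sigma>) (psi n T) = tpair n T (xf r1 n) (xf r2 n) (xf r3 n) (xf r4 n)"
    unfolding braket_tpair xf_def r1_def r2_def r3_def r4_def ..
  define X where "X = xf r1 n" define Y where "Y = xf r2 n"
  define U where "U = xf r3 n" define V where "V = xf r4 n"
  define XS where "XS = xs \<tau> r1 n" define YS where "YS = xs \<tau> r2 n"
  define US where "US = xs \<tau> r3 n" define VS where "VS = xs \<tau> r4 n"
  define XB where "XB = xb \<tau> r1 n" define YB where "YB = xb \<tau> r2 n"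
  define UB where "UB = xb \<tau> r3 n" define VB where "VB = xb \<tau> r4 n"
  have sX: "X = (\<lambda>i. XS i + XB i)" unfolding X_def XS_def XB_def by (rule xf_split)
  have sY: "Y = (\<lambda>i. YS i + YB i)" unfolding Y_def YS_def YB_def by (rule xf_split)
  have sU: "U = (\<lambda>i. US i + UB i)" unfolding U_def US_def UB_def by (rule xf_split)
  have sV: "V = (\<lambda>i. VS i + VB i)" unfolding V_def VS_def VB_def by (rule xf_split)
  have dec: "tpair n T X Y U V = tpair n T XS YS US VS + tpair n T XB Y U V + tpair n T XS YB U V
      + tpair n T XS YS UB V + tpair n T XS YS US VB"
  proof -
    have "tpair n T X Y U V = tpair n T XS Y U V + tpair n T XB Y U V"
      unfolding sX by (rule tpair_add1)
    moreover have "tpair n T XS Y U V = tpair n T XS YS U V + tpair n T XS YB U V"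
      unfolding sY by (rule tpair_add2)
    moreover have "tpair n T XS YS U V = tpair n T XS YS US V + tpair n T XS YS UB V"
      unfolding sU by (rule tpair_add3)
    moreover have "tpair n T XS YS US V = tpair n T XS YS US VS + tpair n T XS YS US VB"
      unfolding sV by (rule tpair_add4)
    ultimately show ?thesis by (simp add: algebra_simps)
  qed
  have vS: "vnorm n XS * vnorm n YS * vnorm n US * vnorm n VS \<le> exp (2*\<tau> - 2)"
  proof -
    let ?E = "exp (\<tau> - 1)"
    have "(vnorm n XS * vnorm n YS * vnorm n US * vnorm n VS)\<^sup>2
        = (vnorm n XS)\<^sup>2 * (vnorm n YS)\<^sup>2 * (vnorm n US)\<^sup>2 * (vnorm n VS)\<^sup>2"
      by (simp add: power_mult_distrib)
    also have "\<dots> \<le> ?E * ?E * ?E * ?E"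
      by (rule prod4_mono) (use f1(1) f2(1) f3(1) f4(1) in \<open>simp_all add: XS_def YS_def US_def VS_def\<close>)
    also have "\<dots> = (exp (2*\<tau> - 2))\<^sup>2"
    proof -
      have "2*\<tau> - 2 = (\<tau> - 1) + (\<tau> - 1)" by simp
      then have "exp (2*\<tau> - 2) = ?E * ?E" by (simp add: exp_add[symmetric])
      then show ?thesis by (simp add: power2_eq_square)
    qed
    finally show ?thesis
      by (rule power2_le_imp_le) simp
  qed
  have A: "cmod (tpair n T XS YS US VS) \<le> OPT_T n T * exp (2*\<tau> - 2)"
    by (rule order_trans[OF tpair_opt[OF n fr, where x=XS and y=YS and u=US and v=VS]
        mult_left_mono[OF vS OPT_T_nonneg[OF n fr]]])
  have l1s: "\<And>Z. 0 \<le> l1 n Z" by (rule l1_nonneg)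
  have B1: "cmod (tpair n T XB Y U V) \<le> ?m * ?K"
  proof -
    have "cmod (tpair n T XB Y U V) \<le> ?m * (l1 n XB * l1 n Y * l1 n U * l1 n V)" by (rule tpair_l1[OF mT])
    also have "\<dots> \<le> ?m * ?K"
      by (rule mult_left_mono[OF _ m0], rule prod4_mono)
         (use f1 f2 f3 f4 l1s in \<open>simp_all add: XB_def Y_def U_def V_def\<close>)
    finally show ?thesis .
  qed
  have B2: "cmod (tpair n T XS YB U V) \<le> ?m * ?K"
  proof -
    have "cmod (tpair n T XS YB U V) \<le> ?m * (l1 n YB * l1 n XS * l1 n U * l1 n V)"
      using tpair_l1[OF mT, where x=XS and y=YB and u=U and v=V] by (simp add: mult_ac)
    also have "\<dots> \<le> ?m * ?K"
      by (rule mult_left_mono[OF _ m0], rule prod4_mono)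
         (use f1 f2 f3 f4 l1s in \<open>simp_all add: XS_def YB_def U_def V_def\<close>)
    finally show ?thesis .
  qed
  have B3: "cmod (tpair n T XS YS UB V) \<le> ?m * ?K"
  proof -
    have "cmod (tpair n T XS YS UB V) \<le> ?m * (l1 n UB * l1 n XS * l1 n YS * l1 n V)"
      using tpair_l1[OF mT, where x=XS and y=YS and u=UB and v=V] by (simp add: mult_ac)
    also have "\<dots> \<le> ?m * ?K"
      by (rule mult_left_mono[OF _ m0], rule prod4_mono)
         (use f1 f2 f3 f4 l1s in \<open>simp_all add: XS_def YS_def UB_def V_def\<close>)
    finally show ?thesis .
  qed
  have B4: "cmod (tpair n T XS YS US VB) \<le> ?m * ?K"
  proof -
    have "cmod (tpair n T XS YS US VB) \<le> ?m * (l1 n VB * l1 n XS * l1 n YS * l1 n US)"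
      using tpair_l1[OF mT, where x=XS and y=YS and u=US and v=VB] by (simp add: mult_ac)
    also have "\<dots> \<le> ?m * ?K"
      by (rule mult_left_mono[OF _ m0], rule prod4_mono)
         (use f1 f2 f3 f4 l1s in \<open>simp_all add: XS_def YS_def US_def VB_def\<close>)
    finally show ?thesis .
  qed
  have "cmod (braket (4*n) (prod_amp \<sigma>) (psi n T)) = cmod (tpair n T X Y U V)"
    by (simp add: br X_def Y_def U_def V_def)
  also have "\<dots> \<le> cmod (tpair n T XS YS US VS) + cmod (tpair n T XB Y U V) + cmod (tpair n T XS YB U V)
      + cmod (tpair n T XS YS UB V) + cmod (tpair n T XS YS US VB)"
    unfolding dec by (rule norm5)
  also have "\<dots> \<le> OPT_T n T * exp (2*\<tau> - 2) + 4 * (?m * ?K)"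
    using A B1 B2 B3 B4 by linarith
  finally show ?thesis .
qed



definition cc :: "(nat \<Rightarrow> complex) \<Rightarrow> nat \<Rightarrow> real" where "cc w q = 1 / sqrt (1 + (cmod (w q))\<^sup>2)"
definition rho :: "(nat \<Rightarrow> complex) \<Rightarrow> nat \<Rightarrow> bool \<Rightarrow> complex" where
  "rho w q b = (if b then cnj (w q) * of_real (cc w q) else of_real (cc w q))"

lemma rho_pure: "(cmod (rho w q False))\<^sup>2 + (cmod (rho w q True))\<^sup>2 = 1"
proof -
  have h: "0 < 1 + (cmod (w q))\<^sup>2" by (simp add: add_pos_nonneg)
  have "(cc w q)\<^sup>2 = 1 / (1 + (cmod (w q))\<^sup>2)" using h by (simp add: cc_def power_divide)
  then have "(cc w q)\<^sup>2 * (1 + (cmod (w q))\<^sup>2) = 1" using h by simp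
  then show ?thesis by (simp add: rho_def norm_mult power_mult_distrib algebra_simps)
qed

lemma amp_rho: "i < n \<Longrightarrow> amp n (rho w) i = cnj (w i) * of_real (\<Prod>q<n. cc w q)"
proof -
  assume i: "i < n"
  have "(\<Prod>q<n. cc w q) = cc w i * (\<Prod>q\<in>{..<n}-{i}. cc w q)"
    using prod.remove[of "{..<n}" i "cc w"] i by simp
  then show ?thesis using i by (simp add: amp_split rho_def mult_ac)
qed

lemma cc_ge: "exp (- ((cmod (w q))\<^sup>2 / 2)) \<le> cc w q"
proof -
  let ?s = "(cmod (w q))\<^sup>2"
  have h: "0 < 1 + ?s" by (simp add: add_pos_nonneg)
  have "(sqrt (1 + ?s))\<^sup>2 \<le> (exp (?s/2))\<^sup>2"
  proof -
    have "(exp (?s/2))\<^sup>2 = exp (2 * (?s/2))" by (rule exp_double[symmetric])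
    also have "2 * (?s/2) = ?s" by simp
    finally show ?thesis using h exp_ge_add_one_self[of ?s] by simp
  qed
  then have "sqrt (1 + ?s) \<le> exp (?s/2)" by (rule power2_le_imp_le) simp
  then have "1 / exp (?s/2) \<le> 1 / sqrt (1 + ?s)" using h by (intro divide_left_mono) auto
  then show ?thesis by (simp add: cc_def exp_minus inverse_eq_divide)
qed

lemma cc_prod_ge:
  assumes "(\<Sum>q<n. (cmod (w q))\<^sup>2) = 1"
  shows "exp (-(1/2)) \<le> (\<Prod>q<n. cc w q)"
proof -
  have "(\<Prod>q<n. exp (- ((cmod (w q))\<^sup>2 / 2))) \<le> (\<Prod>q<n. cc w q)"
    by (rule prod_mono) (simp add: cc_ge)
  moreover have "(\<Prod>q<n. exp (- ((cmod (w q))\<^sup>2 / 2))) = exp (-(1/2))"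
  proof -
    have "(\<Prod>q<n. exp (- ((cmod (w q))\<^sup>2 / 2))) = exp (\<Sum>q<n. - ((cmod (w q))\<^sup>2 / 2))"
      by (simp add: exp_sum)
    also have "(\<Sum>q<n. - ((cmod (w q))\<^sup>2 / 2)) = - ((\<Sum>q<n. (cmod (w q))\<^sup>2) / 2)"
      by (simp add: sum_negf sum_divide_distrib)
    finally show ?thesis using assms by simp
  qed
  ultimately show ?thesis by simp
qed

lemma normalize:
  assumes "nonzero_vec n x"
  shows "(\<Sum>i<n. (cmod (x i * of_real (1 / vnorm n x)))\<^sup>2) = 1"
proof -
  have v: "0 < vnorm n x" by (rule vnorm_pos[OF assms])
  define c where "c = 1 / vnorm n x"
  have c: "0 < c" using v by (simp add: c_def)
  have "(\<Sum>i<n. (cmod (x i * of_real c))\<^sup>2) = c\<^sup>2 * (\<Sum>i<n. (cmod (x i))\<^sup>2)"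
    by (simp add: norm_mult abs_of_pos[OF c] power_mult_distrib sum_distrib_left mult.commute)
  also have "\<dots> = c\<^sup>2 * (vnorm n x)\<^sup>2" by (simp add: vnorm_sq)
  also have "\<dots> = 1" using v by (simp add: c_def power_divide)
  finally show ?thesis by (simp add: c_def)
qed

definition glue where
  "glue n w1 w2 w3 w4 q b = (if q < n then rho w1 q b else if q < 2*n then rho w2 (q-n) b
     else if q < 3*n then rho w3 (q-2*n) b else rho w4 (q-3*n) b)"

lemma glue_pure: "pure_product_state (4*n) (glue n w1 w2 w3 w4)"
  by (simp add: pure_product_state_def glue_def rho_pure)

lemma tpair_cong:
  assumes "\<And>i. i<n \<Longrightarrow> x i = x' i" "\<And>i. i<n \<Longrightarrow> y i = y' i" "\<And>i. i<n \<Longrightarrow> u i = u' i" "\<And>i. i<n \<Longrightarrow> v i = v' i"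
  shows "tpair n T x y u v = tpair n T x' y' u' v'"
  unfolding tpair_def by (intro sum.cong refl) (simp add: assms)

lemma lower_elem:
  assumes n: "0 < n" and nz: "nonzero_vec n x" "nonzero_vec n y" "nonzero_vec n u" "nonzero_vec n v"
  shows "\<exists>\<sigma>. pure_product_state (4*n) \<sigma> \<and>
    exp (-2) * (cmod (tpair n T x y u v) / (vnorm n x * vnorm n y * vnorm n u * vnorm n v))
      \<le> cmod (braket (4*n) (prod_amp \<sigma>) (psi n T))"
proof -
  define w1 where "w1 = (\<lambda>i. x i * of_real (1 / vnorm n x))"
  define w2 where "w2 = (\<lambda>i. y i * of_real (1 / vnorm n y))"
  define w3 where "w3 = (\<lambda>i. u i * of_real (1 / vnorm n u))"
  define w4 where "w4 = (\<lambda>i. v i * of_real (1 / vnorm n v))"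
  define \<sigma> where "\<sigma> = glue n w1 w2 w3 w4"
  define C1 where "C1 = (\<Prod>q<n. cc w1 q)"
  define C2 where "C2 = (\<Prod>q<n. cc w2 q)"
  define C3 where "C3 = (\<Prod>q<n. cc w3 q)"
  define C4 where "C4 = (\<Prod>q<n. cc w4 q)"
  have C1: "exp (-(1/2)) \<le> C1" unfolding C1_def w1_def by (rule cc_prod_ge[OF normalize[OF nz(1)]])
  have C2: "exp (-(1/2)) \<le> C2" unfolding C2_def w2_def by (rule cc_prod_ge[OF normalize[OF nz(2)]])
  have C3: "exp (-(1/2)) \<le> C3" unfolding C3_def w3_def by (rule cc_prod_ge[OF normalize[OF nz(3)]])
  have C4: "exp (-(1/2)) \<le> C4" unfolding C4_def w4_def by (rule cc_prod_ge[OF normalize[OF nz(4)]])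
  have a1: "cnj (amp n \<sigma> i) = w1 i * of_real C1" if "i < n" for i
  proof -
    have "amp n \<sigma> i = amp n (rho w1) i" unfolding \<sigma>_def by (rule amp_cong) (auto simp: glue_def)
    then show ?thesis using amp_rho[OF that] by (simp add: C1_def)
  qed
  have a2: "cnj (amp n (\<lambda>q. \<sigma> (n+q)) i) = w2 i * of_real C2" if "i < n" for i
  proof -
    have "amp n (\<lambda>q. \<sigma> (n+q)) i = amp n (rho w2) i" unfolding \<sigma>_def by (rule amp_cong) (auto simp: glue_def)
    then show ?thesis using amp_rho[OF that] by (simp add: C2_def)
  qed
  have a3: "cnj (amp n (\<lambda>q. \<sigma> (n+(n+q))) i) = w3 i * of_real C3" if "i < n" for i
  proof -
    have "amp n (\<lambda>q. \<sigma> (n+(n+q))) i = amp n (rho w3) i" unfolding \<sigma>_def by (rule amp_cong) (auto simp: glue_def)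
    then show ?thesis using amp_rho[OF that] by (simp add: C3_def)
  qed
  have a4: "cnj (amp n (\<lambda>q. \<sigma> (n+(n+(n+q)))) i) = w4 i * of_real C4" if "i < n" for i
  proof -
    have "amp n (\<lambda>q. \<sigma> (n+(n+(n+q)))) i = amp n (rho w4) i" unfolding \<sigma>_def by (rule amp_cong) (auto simp: glue_def)
    then show ?thesis using amp_rho[OF that] by (simp add: C4_def)
  qed
  have "braket (4*n) (prod_amp \<sigma>) (psi n T)
      = tpair n T (\<lambda>i. w1 i * of_real C1) (\<lambda>i. w2 i * of_real C2) (\<lambda>i. w3 i * of_real C3) (\<lambda>i. w4 i * of_real C4)"
    unfolding braket_tpair by (rule tpair_cong) (simp_all add: a1 a2 a3 a4)
  also have "\<dots> = (of_real C1 * of_real C2 * of_real C3 * of_real C4) * tpair n T w1 w2 w3 w4"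
    by (rule tpair_scale)
  also have "tpair n T w1 w2 w3 w4 = (of_real (1 / vnorm n x) * of_real (1 / vnorm n y) * of_real (1 / vnorm n u)
      * of_real (1 / vnorm n v)) * tpair n T x y u v"
    unfolding w1_def w2_def w3_def w4_def by (rule tpair_scale)
  finally have br: "braket (4*n) (prod_amp \<sigma>) (psi n T) = of_real (C1 * C2 * C3 * C4
      * (1 / (vnorm n x * vnorm n y * vnorm n u * vnorm n v))) * tpair n T x y u v"
    by simp
  have e0: "0 < exp (-(1/2)::real)" by simp
  have Cge: "exp (-(1/2)) * exp (-(1/2)) * exp (-(1/2)) * exp (-(1/2)) \<le> C1 * C2 * C3 * C4"
    by (rule prod4_mono) (use C1 C2 C3 C4 e0 in \<open>simp_all add: less_imp_le\<close>)
  have ee: "exp (-(1/2)) * exp (-(1/2)) * exp (-(1/2)) * exp (-(1/2)) = exp (-2::real)"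
    by (simp add: exp_add[symmetric])
  have Cpos: "0 \<le> C1 * C2 * C3 * C4" using Cge ee by (metis exp_ge_zero order_trans)
  have vpos: "0 < vnorm n x * vnorm n y * vnorm n u * vnorm n v" using nz by (simp add: vnorm_pos)
  let ?R = "cmod (tpair n T x y u v) / (vnorm n x * vnorm n y * vnorm n u * vnorm n v)"
  have R0: "0 \<le> ?R" using vpos by simp
  have "cmod (braket (4*n) (prod_amp \<sigma>) (psi n T)) = (C1 * C2 * C3 * C4) * ?R"
  proof -
    have nn: "0 \<le> C1 * C2 * C3 * C4 * (1 / (vnorm n x * vnorm n y * vnorm n u * vnorm n v))"
      using Cpos vpos by simp
    show ?thesis unfolding br norm_mult norm_of_real abs_of_nonneg[OF nn] by simp
  qed
  moreover have "exp (-2) * ?R \<le> (C1 * C2 * C3 * C4) * ?R"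
    by (rule mult_right_mono) (use Cge ee R0 in auto)
  ultimately show ?thesis using glue_pure[of n w1 w2 w3 w4] unfolding \<sigma>_def by auto
qed



lemma exp_2tau_le:
  fixes \<tau> :: real
  assumes "0 \<le> \<tau>" "\<tau> \<le> 1/4"
  shows "exp (2*\<tau>) \<le> 1 + 4*\<tau>"
proof -
  have h: "1 - 2*\<tau> \<le> exp (-(2*\<tau>))" by (rule one_minus_le_exp)
  have p: "0 < 1 - 2*\<tau>" using assms by simp
  have "exp (2*\<tau>) * (1 - 2*\<tau>) \<le> exp (2*\<tau>) * exp (-(2*\<tau>))"
    by (rule mult_left_mono[OF h]) simp
  also have "\<dots> = 1" by (simp add: exp_minus)
  finally have "exp (2*\<tau>) * (1 - 2*\<tau>) \<le> 1" .
  moreover have "1 \<le> (1 + 4*\<tau>) * (1 - 2*\<tau>)"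
  proof -
    have "(1 + 4*\<tau>) * (1 - 2*\<tau>) = 1 + 2*\<tau>*(1 - 4*\<tau>)" by (simp add: algebra_simps)
    moreover have "0 \<le> 2*\<tau>*(1 - 4*\<tau>)" using assms by simp
    ultimately show ?thesis by simp
  qed
  ultimately have "exp (2*\<tau>) * (1 - 2*\<tau>) \<le> (1 + 4*\<tau>) * (1 - 2*\<tau>)" by linarith
  then show ?thesis using p by simp
qed

lemma OPTpsi_ne: "{cmod (braket (4*n) (prod_amp \<sigma>) (psi n T)) | \<sigma>. pure_product_state (4*n) \<sigma>} \<noteq> {}"
  using glue_pure[of n "\<lambda>_. 0" "\<lambda>_. 0" "\<lambda>_. 0" "\<lambda>_. 0"] by blast

theorem lemma7p5:
  shows "\<exists>n0::nat. \<forall>n\<ge>n0. \<forall>T :: nat \<Rightarrow> nat \<Rightarrow> nat \<Rightarrow> nat \<Rightarrow> complex.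
    frob n T = 1 \<longrightarrow>
    (let M = (real n)\<^sup>2 * max_entry n T in
      exp (-2) * OPT_T n T - 10 * M / real n powr 0.2 \<le> OPT_psi n T \<and>
      OPT_psi n T \<le> exp (-2) * OPT_T n T + 10 / real n powr 0.1 + 10 * M / real n powr 0.2)"
proof (intro exI[of _ "2^20"] allI impI)
  fix n :: nat and T :: "nat \<Rightarrow> nat \<Rightarrow> nat \<Rightarrow> nat \<Rightarrow> complex"
  assume nN: "2^20 \<le> n" and fr: "frob n T = 1"
  define a where "a = real n powr 0.1"
  define \<tau> where "\<tau> = 1 / a"
  define m where "m = max_entry n T"
  have n0: "0 < n" using nN by (metis gr0I le_0_eq pos2 zero_less_power not_less)
  have nreal: "(2::real)^20 \<le> real n" using nN
    by (metis of_nat_le_iff of_nat_numeral of_nat_power)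
  have a0: "0 < a" using n0 by (simp add: a_def)
  have a4: "4 \<le> a"
  proof -
    have "(4::real) = (4 ^ 10) powr 0.1"
    proof -
      have "((4::real) ^ 10) powr 0.1 = (4 powr 10) powr 0.1" by simp
      also have "\<dots> = 4 powr (10 * 0.1)" by (rule powr_powr)
      also have "\<dots> = 4" by simp
      finally show ?thesis by simp
    qed
    also have "\<dots> \<le> real n powr 0.1"
      by (rule powr_mono2) (use nreal in simp_all)
    finally show ?thesis by (simp add: a_def)
  qed
  have na: "real n = a ^ 10"
  proof -
    have "a ^ 10 = a powr 10" using a0 by simp
    also have "\<dots> = real n powr (0.1 * 10)" unfolding a_def by (rule powr_powr)
    also have "\<dots> = real n" by simp
    finally show ?thesis by simp
  qed
  have n02: "real n powr 0.2 = a ^ 2"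
  proof -
    have "a ^ 2 = a powr 2" using a0 by simp
    also have "\<dots> = real n powr (0.1 * 2)" unfolding a_def by (rule powr_powr)
    finally show ?thesis by simp
  qed
  have sqn: "sqrt (real n) = a ^ 5"
  proof -
    have h1: "sqrt ((a ^ 5)\<^sup>2) = \<bar>a ^ 5\<bar>" by (rule real_sqrt_abs)
    have h2: "(a ^ 5)\<^sup>2 = real n" by (simp add: na)
    show ?thesis by (metis h1 h2 abs_of_pos a0 zero_less_power)
  qed
  have t: "0 < \<tau>" "\<tau> \<le> 1" "\<tau> \<le> 1/4" using a4 by (simp_all add: \<tau>_def)
  have a2: "16 \<le> a ^ 2" using power_mono[OF a4, of 2] by simp
  have tn: "2 / \<tau> \<le> sqrt (real n)"
  proof -
    have "2 \<le> a ^ 4" using power_mono[OF a4, of 4] by simp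
    then have "2 * a \<le> a ^ 4 * a" using a0 by simp
    moreover have "a ^ 4 * a = a ^ 5" by algebra
    ultimately show ?thesis by (simp add: \<tau>_def sqn)
  qed
  have m0: "0 \<le> m" using max_entry_nonneg[OF n0] by (simp add: m_def)
  have o0: "0 \<le> OPT_T n T" and o1: "OPT_T n T \<le> 1"
    using OPT_T_nonneg[OF n0 fr] OPT_T_le1[OF n0 fr] by auto
  define U where "U = exp (-2) * OPT_T n T + 10 / real n powr 0.1 + 10 * ((real n)\<^sup>2 * m) / real n powr 0.2"
  have e1: "OPT_T n T * exp (2*\<tau> - 2) \<le> exp (-2) * OPT_T n T + 10 / real n powr 0.1"
  proof -
    have "OPT_T n T * exp (2*\<tau> - 2) = exp (-2) * OPT_T n T * exp (2*\<tau>)"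
      by (simp add: exp_diff exp_minus field_simps)
    also have "\<dots> \<le> exp (-2) * OPT_T n T * (1 + 4*\<tau>)"
      by (rule mult_left_mono[OF exp_2tau_le]) (use t o0 in auto)
    also have "\<dots> = exp (-2) * OPT_T n T + exp (-2) * OPT_T n T * (4*\<tau>)" by (simp add: algebra_simps)
    also have "exp (-2) * OPT_T n T * (4*\<tau>) \<le> 1 * 1 * (4*\<tau>)"
      by (intro mult_mono) (use o0 o1 t in auto)
    also have "1 * 1 * (4*\<tau>) \<le> 10 / real n powr 0.1" using a0 by (simp add: \<tau>_def a_def[symmetric] divide_right_mono)
    finally show ?thesis by simp
  qed
  have e2: "4 * (m * ((2/\<tau>) * (2 * sqrt (real n)) * (2 * sqrt (real n)) * (2 * sqrt (real n))))
      \<le> 10 * ((real n)\<^sup>2 * m) / real n powr 0.2"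
  proof -
    have l: "4 * (m * ((2/\<tau>) * (2 * sqrt (real n)) * (2 * sqrt (real n)) * (2 * sqrt (real n)))) = m * (64 * a^16)"
      by (simp add: \<tau>_def sqn; algebra)
    have r: "10 * ((real n)\<^sup>2 * m) / real n powr 0.2 = m * (10 * a^2 * a^16)"
      unfolding n02 unfolding na using a0 by (simp add: field_simps; algebra)
    have "64 * a^16 \<le> 10 * a^2 * a^16" using a2 by (intro mult_right_mono) auto
    then have "m * (64 * a^16) \<le> m * (10 * a^2 * a^16)" using m0 by (rule mult_left_mono)
    then show ?thesis using l r by simp
  qed
  have upper_each: "cmod (braket (4*n) (prod_amp \<sigma>) (psi n T)) \<le> U"
    if ps: "pure_product_state (4*n) \<sigma>" for \<sigma>
  proof -
    have "cmod (braket (4*n) (prod_amp \<sigma>) (psi n T))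
       \<le> OPT_T n T * exp (2*\<tau> - 2) + 4 * (m * ((2/\<tau>) * (2 * sqrt (real n)) * (2 * sqrt (real n)) * (2 * sqrt (real n))))"
      unfolding m_def by (rule upper_sigma[OF n0 fr ps t(1) t(2) tn])
    also have "\<dots> \<le> U" using e1 e2 by (simp add: U_def)
    finally show ?thesis .
  qed
  let ?P = "{cmod (braket (4*n) (prod_amp \<sigma>) (psi n T)) | \<sigma>. pure_product_state (4*n) \<sigma>}"
  have Pbdd: "bdd_above ?P" using upper_each by (auto intro!: bdd_aboveI)
  have up: "OPT_psi n T \<le> U"
    unfolding OPT_psi_def by (rule cSup_least[OF OPTpsi_ne]) (use upper_each in auto)
  have low: "exp (-2) * OPT_T n T \<le> OPT_psi n T"
  proof -
    have "OPT_T n T \<le> exp 2 * OPT_psi n T"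
      unfolding OPT_T_eq
    proof (rule cSup_least[OF OPTset_ne[OF n0]])
      fix r assume "r \<in> OPTset n T"
      then obtain x y u v where r: "r = cmod (tpair n T x y u v) / (vnorm n x * vnorm n y * vnorm n u * vnorm n v)"
        and nz: "nonzero_vec n x" "nonzero_vec n y" "nonzero_vec n u" "nonzero_vec n v"
        unfolding OPTset_def by blast
      obtain \<sigma> where ps: "pure_product_state (4*n) \<sigma>"
        and le: "exp (-2) * r \<le> cmod (braket (4*n) (prod_amp \<sigma>) (psi n T))"
        using lower_elem[OF n0 nz, of T] unfolding r by blast
      have "cmod (braket (4*n) (prod_amp \<sigma>) (psi n T)) \<le> OPT_psi n T"
        unfolding OPT_psi_def by (rule cSup_upper[OF _ Pbdd]) (use ps in blast)
      with le have "exp (-2) * r \<le> OPT_psi n T" by linarith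
      then have "exp 2 * (exp (-2) * r) \<le> exp 2 * OPT_psi n T" by simp
      moreover have "exp 2 * (exp (-2) * r) = r" by (simp add: exp_minus)
      ultimately show "r \<le> exp 2 * OPT_psi n T" by simp
    qed
    then have "exp (-2) * OPT_T n T \<le> exp (-2) * (exp 2 * OPT_psi n T)" by simp
    also have "\<dots> = OPT_psi n T" by (simp add: exp_minus)
    finally show ?thesis .
  qed
  have pw: "0 < real n powr 0.2" using n0 by simp
  have M0: "0 \<le> 10 * ((real n)\<^sup>2 * m) / real n powr 0.2" using m0 pw by simp
  show "let M = (real n)\<^sup>2 * max_entry n T in
      exp (-2) * OPT_T n T - 10 * M / real n powr 0.2 \<le> OPT_psi n T \<and>
      OPT_psi n T \<le> exp (-2) * OPT_T n T + 10 / real n powr 0.1 + 10 * M / real n powr 0.2"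
    unfolding Let_def m_def[symmetric] using low up M0 by (simp add: U_def)
qed


end
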